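(* Let $(\|\cdot\|_n)_{n\in\mathbb N}$ be a sequence of norms on $\mathbb R^d$ and $(A_n)_{n\in\mathbb N}$ a sequence of invertible linear operators on $\mathbb R^d$ such that there exist $K,a>0$ with $\|\mathcal A(m,n)x\|_m\le K(m/n)^a\|x\|_n$ and $\|\mathcal A(n,m)x\|_n\le K(m/n)^a\|x\|_m$ for all $m\ge n$ in $\mathbb N$ and $x\in\mathbb R^d$. Set $B_n=\mathcal A(2^{n+1},2^n)$ for $n\ge0$. The following are equivalent: (a) $(A_n)_{n\in\mathbb N}$ admits a strong polynomial dichotomy with respect to $(\|\cdot\|_n)_{n\in\mathbb N}$; (b) $(B_n)_{n\in\mathbb Z^+}$ admits a strong exponential dichotomy with respect to $(\|\cdot\|_{2^n})_{n\in\mathbb Z^+}$.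
   Context: $\mathbb N=\{1,2,\dots\}$, $\mathbb Z^+=\{0,1,2,\dots\}$. For a sequence $(C_n)$ of invertible operators, $\mathcal C(m,n)=C_{m-1}\cdots C_n$ ($m>n$), $\mathrm{Id}$ ($m=n$), $C_m^{-1}\cdots C_{n-1}^{-1}$ ($m<n$); $\mathcal A$ is this for $(A_n)$. Strong polynomial dichotomy w.r.t. norms $(\|\cdot\|_n)_{n\in\mathbb N}$: there exist $K>0$, $a\ge\lambda>0$ and projections $P_n$ with $A_nP_n=P_{n+1}A_n$ such that for $m\ge n$, $x$, $Q_m=\mathrm{Id}-P_m$: $\|\mathcal A(m,n)P_nx\|_m\le K(m/n)^{-\lambda}\|x\|_n$, $\|\mathcal A(n,m)Q_mx\|_n\le K(m/n)^{-\lambda}\|x\|_m$, $\|\mathcal A(m,n)x\|_m\le K(m/n)^a\|x\|_n$, $\|\mathcal A(n,m)x\|_n\le K(m/n)^a\|x\|_m$. Strong exponential dichotomy w.r.t. norms $(|\cdot|_n)_{n\in\mathbb Z^+}$ for $(B_n)_{n\in\mathbb Z^+}$: there exist $K>0$, $a\ge\lambda>0$, projections $\tilde P_n$ with $B_n\tilde P_n=\tilde P_{n+1}B_n$ such that for $m\ge n$, $x$, $\tilde Q_m=\mathrm{Id}-\tilde P_m$: $|\mathcal B(m,n)\tilde P_nx|_m\le Ke^{-\lambda(m-n)}|x|_n$, $|\mathcal B(n,m)\tilde Q_mx|_n\le Ke^{-\lambda(m-n)}|x|_m$, $|\mathcal B(m,n)x|_m\le Ke^{a(m-n)}|x|_n$,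 $|\mathcal B(n,m)x|_n\le Ke^{a(m-n)}|x|_m$. *)

theory Defs
  imports "HOL-Analysis.Analysis"
begin

definition is_norm :: "('a::real_vector \<Rightarrow> real) \<Rightarrow> bool" where
  "is_norm N \<longleftrightarrow> (\<forall>x. 0 \<le> N x) \<and> (\<forall>x. N x = 0 \<longleftrightarrow> x = 0)
     \<and> (\<forall>c x. N (c *\<^sub>R x) = \<bar>c\<bar> * N x) \<and> (\<forall>x y. N (x + y) \<le> N x + N y)"

fun fprod :: "(nat \<Rightarrow> 'a \<Rightarrow> 'a) \<Rightarrow> nat \<Rightarrow> nat \<Rightarrow> 'a \<Rightarrow> 'a" where
  "fprod C n 0 = id"
| "fprod C n (Suc k) = C (n + k) \<circ> fprod C n k"

fun bprod :: "(nat \<Rightarrow> 'a \<Rightarrow> 'a) \<Rightarrow> nat \<Rightarrow> nat \<Rightarrow> 'a \<Rightarrow> 'a" where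
  "bprod C m 0 = id"
| "bprod C m (Suc k) = bprod C m k \<circ> inv (C (m + k))"

text \<open>The evolution family: C(m,n) = C_{m-1}...C_n for m > n, Id for m = n,
  C_m^{-1} ... C_{n-1}^{-1} for m < n.\<close>
definition evol :: "(nat \<Rightarrow> 'a \<Rightarrow> 'a) \<Rightarrow> nat \<Rightarrow> nat \<Rightarrow> 'a \<Rightarrow> 'a" where
  "evol C m n = (if n \<le> m then fprod C n (m - n) else bprod C m (n - m))"

definition is_projection :: "('a::real_vector \<Rightarrow> 'a) \<Rightarrow> bool" where
  "is_projection P \<longleftrightarrow> linear P \<and> (\<forall>x. P (P x) = P x)"

definition strong_poly_dich ::
  "(nat \<Rightarrow> 'a::real_vector \<Rightarrow> 'a) \<Rightarrow> (nat \<Rightarrow> 'a \<Rightarrow> real) \<Rightarrow> bool" where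
  "strong_poly_dich A N \<longleftrightarrow>
    (\<exists>K a lam P. K > 0 \<and> a \<ge> lam \<and> lam > 0 \<and>
      (\<forall>n\<ge>1. is_projection (P n)) \<and>
      (\<forall>n\<ge>1. A n \<circ> P n = P (Suc n) \<circ> A n) \<and>
      (\<forall>m n x. 1 \<le> n \<and> n \<le> m \<longrightarrow>
         N m (evol A m n (P n x)) \<le> K * (real m / real n) powr (-lam) * N n x \<and>
         N n (evol A n m (x - P m x)) \<le> K * (real m / real n) powr (-lam) * N m x \<and>
         N m (evol A m n x) \<le> K * (real m / real n) powr a * N n x \<and>
         N n (evol A n m x) \<le> K * (real m / real n) powr a * N m x))"

definition strong_exp_dich ::
  "(nat \<Rightarrow> 'a::real_vector \<Rightarrow> 'a) \<Rightarrow> (nat \<Rightarrow> 'a \<Rightarrow> real) \<Rightarrow> bool" where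
  "strong_exp_dich B N \<longleftrightarrow>
    (\<exists>K a lam P. K > 0 \<and> a \<ge> lam \<and> lam > 0 \<and>
      (\<forall>n. is_projection (P n)) \<and>
      (\<forall>n. B n \<circ> P n = P (Suc n) \<circ> B n) \<and>
      (\<forall>m n x. n \<le> m \<longrightarrow>
         N m (evol B m n (P n x)) \<le> K * exp (-lam * (real m - real n)) * N n x \<and>
         N n (evol B n m (x - P m x)) \<le> K * exp (-lam * (real m - real n)) * N m x \<and>
         N m (evol B m n x) \<le> K * exp (a * (real m - real n)) * N n x \<and>
         N n (evol B n m x) \<le> K * exp (a * (real m - real n)) * N m x))"

end

theory Submission
  imports Defs "HOL-Analysis.Analysis"
begin

lemma evol_rep_fprod:
  assumes C: "\<And>k. k \<ge> b \<Longrightarrow> C k = \<Phi> (Suc k) \<circ> inv (\<Phi> k)"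
    and B: "\<And>k. k \<ge> b \<Longrightarrow> bij (\<Phi> k)" and "b \<le> n"
  shows "fprod C n k = \<Phi> (n + k) \<circ> inv (\<Phi> n)"
proof (induction k)
  case 0
  then show ?case using B[OF assms(3)] by (auto simp: fun_eq_iff bij_is_surj surj_f_inv_f)
next
  case (Suc k)
  show ?case using Suc C[of "n+k"] B[of "n+k"] assms(3) by (auto simp: fun_eq_iff bij_is_inj inv_f_f)
qed

lemma evol_rep_bprod:
  assumes C: "\<And>k. k \<ge> b \<Longrightarrow> C k = \<Phi> (Suc k) \<circ> inv (\<Phi> k)"
    and B: "\<And>k. k \<ge> b \<Longrightarrow> bij (\<Phi> k)" and "b \<le> m"
  shows "bprod C m k = \<Phi> m \<circ> inv (\<Phi> (m + k))"
proof (induction k)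
  case 0
  then show ?case using B[OF assms(3)] by (auto simp: fun_eq_iff bij_is_surj surj_f_inv_f)
next
  case (Suc k)
  have b1: "bij (\<Phi> (Suc (m+k)))" "bij (\<Phi> (m+k))" using B assms(3) by auto
  have "inv (C (m+k)) = inv (\<Phi> (Suc (m+k)) \<circ> inv (\<Phi> (m+k)))"
    using C[of "m+k"] assms(3) by simp
  also have "\<dots> = inv (inv (\<Phi> (m+k))) \<circ> inv (\<Phi> (Suc (m+k)))"
    using b1 by (simp add: o_inv_distrib bij_imp_bij_inv)
  also have "\<dots> = \<Phi> (m+k) \<circ> inv (\<Phi> (Suc (m+k)))"
    using b1 by (simp add: inv_inv_eq)
  finally show ?case using Suc b1 by (auto simp: fun_eq_iff bij_is_inj inv_f_f)
qed

lemma evol_rep: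
  assumes C: "\<And>k. k \<ge> b \<Longrightarrow> C k = \<Phi> (Suc k) \<circ> inv (\<Phi> k)"
    and B: "\<And>k. k \<ge> b \<Longrightarrow> bij (\<Phi> k)" and "b \<le> m" "b \<le> n"
  shows "evol C m n = \<Phi> m \<circ> inv (\<Phi> n)"
proof (cases "n \<le> m")
  case True
  then show ?thesis using evol_rep_fprod[of b C \<Phi> n "m-n", OF C B assms(4)] by (simp add: evol_def)
next
  case False
  then show ?thesis using evol_rep_bprod[of b C \<Phi> m "n-m", OF C B assms(3)] by (simp add: evol_def)
qed

definition Phi :: "(nat \<Rightarrow> 'a \<Rightarrow> 'a) \<Rightarrow> nat \<Rightarrow> 'a \<Rightarrow> 'a" where
  "Phi A k = fprod A 1 (k - 1)"

lemma Phi_bij: assumes "\<And>n. n \<ge> 1 \<Longrightarrow> bij (A n)" shows "bij (fprod A 1 j)"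
proof (induction j)
  case 0 show ?case by (simp only: fprod.simps bij_id)
next
  case (Suc j) show ?case unfolding fprod.simps by (rule bij_comp[OF Suc assms]) simp
qed

lemma Phi_bij': assumes "\<And>n. n \<ge> 1 \<Longrightarrow> bij (A n)" shows "bij (Phi A k)"
  unfolding Phi_def by (rule Phi_bij[where A=A, OF assms(1)])

lemma Phi_rep: assumes "\<And>n. n \<ge> 1 \<Longrightarrow> bij (A n)" "k \<ge> 1"
  shows "A k = Phi A (Suc k) \<circ> inv (Phi A k)"
proof -
  obtain j where j: "k = Suc j" using assms(2) by (cases k) auto
  have "Phi A (Suc k) = A k \<circ> Phi A k" using j by (simp add: Phi_def)
  moreover have "bij (Phi A k)" unfolding Phi_def by (rule Phi_bij[where A=A, OF assms(1)])
  ultimately show ?thesis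
    by (auto simp: fun_eq_iff bij_is_surj surj_f_inv_f)
qed

lemma evol_Phi: assumes "\<And>n. n \<ge> 1 \<Longrightarrow> bij (A n)" "m \<ge> 1" "n \<ge> 1"
  shows "evol A m n = Phi A m \<circ> inv (Phi A n)"
proof (rule evol_rep[of 1])
  show "A k = Phi A (Suc k) \<circ> inv (Phi A k)" if "1 \<le> k" for k using Phi_rep[OF assms(1) that] .
  show "bij (Phi A k)" for k unfolding Phi_def by (rule Phi_bij[where A=A, OF assms(1)])
qed (use assms in auto)

lemma evol_cocycle: assumes "\<And>n. n \<ge> 1 \<Longrightarrow> bij (A n)" "m \<ge> 1" "n \<ge> 1" "l \<ge> 1"
  shows "evol A m l (evol A l n x) = evol A m n x"
  using assms Phi_bij[where A=A, OF assms(1), where j="l-1"]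
  by (simp add: evol_Phi bij_is_inj Phi_def inv_f_f)

lemma evol_id: "evol A n n = id" by (simp add: evol_def)

lemma evol_B: assumes "\<And>n. n \<ge> 1 \<Longrightarrow> bij (A n)"
  shows "evol (\<lambda>n. evol A (2 ^ (n + 1)) (2 ^ n)) m n = evol A (2^m) (2^n)"
proof -
  have "evol (\<lambda>n. evol A (2 ^ (n + 1)) (2 ^ n)) m n = (\<lambda>k. Phi A (2^k)) m \<circ> inv ((\<lambda>k. Phi A (2^k)) n)"
    by (rule evol_rep[of 0]) (auto simp: evol_Phi assms Phi_bij')
  then show ?thesis by (simp add: evol_Phi assms)
qed

lemma evol_linear: fixes A :: "nat \<Rightarrow> 'a::euclidean_space \<Rightarrow> 'a"
  assumes "\<And>n. n \<ge> 1 \<Longrightarrow> bij (A n)" "\<And>n. n \<ge> 1 \<Longrightarrow> linear (A n)" "m \<ge> 1" "n \<ge> 1"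
  shows "linear (evol A m n)"
proof -
  have l: "linear (fprod A 1 j)" for j
  proof (induction j)
    case 0 show ?case by (simp only: fprod.simps linear_id)
  next
    case (Suc j) show ?case unfolding fprod.simps by (rule linear_compose[OF Suc assms(2)]) simp
  qed
  show ?thesis using assms(3,4) l Phi_bij[where A=A, OF assms(1)]
    by (auto simp: evol_Phi assms(1) Phi_def intro!: linear_compose inj_linear_imp_inv_linear bij_is_inj)
qed


lemma pow2_ratio: "(real (2^m) / real (2^n)) powr c = exp (c * ln 2 * (real m - real n))"
proof -
  have "real (2^m) / real (2^n) = 2 powr (real m - real n)"
    by (simp add: powr_diff powr_realpow)
  then show ?thesis by (simp add: powr_powr powr_def mult_ac)
qed

lemma bound3:
  fixes u v w z c1 c2 c3 d1 d2 d3 :: real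
  assumes "u \<le> c1 * v" "v \<le> c2 * w" "w \<le> c3 * z" "0 \<le> c1" "c1 \<le> d1" "0 \<le> c2" "c2 \<le> d2"
    "0 \<le> c3" "c3 \<le> d3" "0 \<le> z"
  shows "u \<le> d1 * d2 * d3 * z"
proof -
  have "u \<le> c1 * (c2 * w)" using assms by (meson mult_left_mono order_trans)
  also have "\<dots> \<le> c1 * (c2 * (c3 * z))" using assms by (simp add: mult_left_mono)
  also have "\<dots> \<le> d1 * (d2 * (d3 * z))"
  proof -
    have "c3 * z \<le> d3 * z" using assms by (simp add: mult_right_mono)
    moreover have "0 \<le> c3 * z" using assms by simp
    ultimately have "c2 * (c3 * z) \<le> d2 * (d3 * z)" using assms by (intro mult_mono) auto
    moreover have "0 \<le> c2 * (c3 * z)" using assms by simp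
    ultimately show ?thesis using assms by (intro mult_mono) auto
  qed
  finally show ?thesis by (simp add: mult_ac)
qed

lemma key_bound:
  fixes u v w z K K2 a lam lam2 r1 r3 q :: real
  assumes "u \<le> K * r1 powr a * v" "v \<le> K2 * exp (-lam2 * t) * w" "w \<le> K * r3 powr a * z"
    "0 \<le> r1" "r1 \<le> 2" "0 \<le> r3" "r3 \<le> 2" "0 \<le> z" "0 < K" "0 < K2" "0 < a"
    "exp (-lam2 * t) \<le> 2 powr lam * q"
  shows "u \<le> (K * 2 powr a * K2 * 2 powr lam * K * 2 powr a) * q * z"
proof -
  have "u \<le> (K * 2 powr a) * (K2 * (2 powr lam * q)) * (K * 2 powr a) * z"
    apply (rule bound3[OF assms(1-3)])
    using assms by (auto intro!: mult_left_mono powr_mono2)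
  then show ?thesis by (simp add: mult_ac)
qed

lemma exp_vs_poly:
  fixes lam2 :: real and i j n m :: nat
  assumes "lam2 > 0" "2^i \<le> n" "n \<le> m" "m < 2^(j+1)"
  shows "exp (-lam2 * (real j - real i)) \<le> 2 powr (lam2 / ln 2) * (real m / real n) powr (-(lam2 / ln 2))"
proof -
  let ?l = "lam2 / ln 2"
  have n0: "real n > 0" using assms(2) by (metis of_nat_0_less_iff less_le_trans zero_less_power pos2)
  have "real m / real n \<le> real (2^(j+1)) / real (2^i)"
  proof -
    have "real m / real n \<le> real (2^(j+1)) / real n"
    proof -
      have "real m \<le> real (2^(j+1))" using assms(4) by (simp only: of_nat_le_iff)
      then show ?thesis using n0 by (intro divide_right_mono) auto
    qed
    also have "\<dots> \<le> real (2^(j+1)) / real (2^i)"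
    proof -
      have "real (2^i) \<le> real n" using assms(2) by (simp only: of_nat_le_iff)
      moreover have "0 < real (2^i)" by simp
      ultimately show ?thesis using n0 by (intro divide_left_mono) (simp_all only: of_nat_0_le_iff mult_pos_pos)
    qed
    finally show ?thesis .
  qed
  then have "(real (2^(j+1)) / real (2^i)) powr (-?l) \<le> (real m / real n) powr (-?l)"
    using assms n0 by (intro powr_mono2') (auto intro!: divide_pos_pos simp: ln_gt_zero)
  moreover have "(real (2^(j+1)) / real (2^i)) powr (-?l) = exp (-lam2 * (real j - real i)) * exp (-lam2)"
    by (subst pow2_ratio) (simp add: exp_add[symmetric] algebra_simps)
  moreover have "2 powr ?l = exp lam2" by (simp add: powr_def)
  ultimately have X: "exp (-lam2 * (real j - real i)) * exp (-lam2) \<le> (real m / real n) powr (-?l)"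
    by simp
  have "exp (-lam2 * (real j - real i)) = 2 powr ?l * (exp (-lam2 * (real j - real i)) * exp (-lam2))"
    using \<open>2 powr ?l = exp lam2\<close> by (simp add: exp_minus field_simps)
  also have "\<dots> \<le> 2 powr ?l * (real m / real n) powr (-?l)"
    using X by (intro mult_left_mono) auto
  finally show ?thesis .
qed


lemma dir1:
  fixes A :: "nat \<Rightarrow> real ^ 'd \<Rightarrow> real ^ 'd"
    and N :: "nat \<Rightarrow> real ^ 'd \<Rightarrow> real"
  assumes inv: "\<And>n. n \<ge> 1 \<Longrightarrow> bij (A n)"
    and H: "strong_poly_dich A N"
  shows "strong_exp_dich (\<lambda>n. evol A (2 ^ (n + 1)) (2 ^ n)) (\<lambda>n. N (2 ^ n))"
proof -
  obtain K a lam P where K: "K > 0" and al: "a \<ge> lam" and lam: "lam > 0"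
    and proj: "\<forall>n\<ge>1. is_projection (P n)"
    and comm: "\<forall>n\<ge>1. A n \<circ> P n = P (Suc n) \<circ> A n"
    and bnd: "\<forall>m n x. 1 \<le> n \<and> n \<le> m \<longrightarrow>
         N m (evol A m n (P n x)) \<le> K * (real m / real n) powr (-lam) * N n x \<and>
         N n (evol A n m (x - P m x)) \<le> K * (real m / real n) powr (-lam) * N m x \<and>
         N m (evol A m n x) \<le> K * (real m / real n) powr a * N n x \<and>
         N n (evol A n m x) \<le> K * (real m / real n) powr a * N m x"
    using H unfolding strong_poly_dich_def by blast
  have commx: "evol A (n + k) n (P n x) = P (n + k) (evol A (n + k) n x)" if "n \<ge> 1" for n k x
  proof (induction k arbitrary: x)
    case 0 then show ?case by (simp add: evol_id)
  next
    case (Suc k)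
    have "evol A (n + Suc k) n (P n x) = A (n + k) (evol A (n + k) n (P n x))"
      by (simp add: evol_def)
    also have "\<dots> = A (n + k) (P (n + k) (evol A (n + k) n x))" using Suc by simp
    also have "\<dots> = P (n + Suc k) (A (n + k) (evol A (n + k) n x))"
      using comm that by (auto simp: fun_eq_iff)
    also have "\<dots> = P (n + Suc k) (evol A (n + Suc k) n x)" by (simp add: evol_def)
    finally show ?case .
  qed
  have p2: "(1::nat) \<le> 2 ^ n" for n by simp
  have le2: "(2::nat) ^ n \<le> 2 ^ m" if "n \<le> m" for n m :: nat using that by (simp add: power_increasing)
  show ?thesis unfolding strong_exp_dich_def
  proof (intro exI conjI allI impI)
    show "K > 0" by (rule K)
    show "lam * ln 2 > 0" using lam by simp
    show "a * ln 2 \<ge> lam * ln 2" using al by (simp add: mult_right_mono)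
    show "is_projection (P (2 ^ n))" for n using proj p2 by blast
    show "evol A (2 ^ (n + 1)) (2 ^ n) \<circ> P (2 ^ n) = P (2 ^ Suc n) \<circ> evol A (2 ^ (n + 1)) (2 ^ n)" for n
      using commx[OF p2[of n], of "2^n"] by (auto simp: fun_eq_iff mult_2)
    fix m n :: nat and x assume nm: "n \<le> m"
    have b: "1 \<le> (2::nat)^n \<and> (2::nat)^n \<le> 2^m" using le2[OF nm] by simp
    note B = bnd[rule_format, OF b, of x, unfolded pow2_ratio]
    show "N (2 ^ m) (evol (\<lambda>n. evol A (2 ^ (n + 1)) (2 ^ n)) m n (P (2 ^ n) x))
        \<le> K * exp (- (lam * ln 2) * (real m - real n)) * N (2 ^ n) x"
      using conjunct1[OF B] by (simp only: mult_minus_left evol_B[where A=A, OF inv])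
    show "N (2 ^ n) (evol (\<lambda>n. evol A (2 ^ (n + 1)) (2 ^ n)) n m (x - P (2 ^ m) x))
        \<le> K * exp (- (lam * ln 2) * (real m - real n)) * N (2 ^ m) x"
      using conjunct1[OF conjunct2[OF B]] by (simp only: mult_minus_left evol_B[where A=A, OF inv])
    show "N (2 ^ m) (evol (\<lambda>n. evol A (2 ^ (n + 1)) (2 ^ n)) m n x)
        \<le> K * exp (a * ln 2 * (real m - real n)) * N (2 ^ n) x"
      using conjunct1[OF conjunct2[OF conjunct2[OF B]]] by (simp only: mult_minus_left evol_B[where A=A, OF inv])
    show "N (2 ^ n) (evol (\<lambda>n. evol A (2 ^ (n + 1)) (2 ^ n)) n m x)
        \<le> K * exp (a * ln 2 * (real m - real n)) * N (2 ^ m) x"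
      using conjunct2[OF conjunct2[OF conjunct2[OF B]]] by (simp only: mult_minus_left evol_B[where A=A, OF inv])
  qed
qed


lemma dir2:
  fixes A :: "nat \<Rightarrow> real ^ 'd \<Rightarrow> real ^ 'd"
    and N :: "nat \<Rightarrow> real ^ 'd \<Rightarrow> real"
    and K a :: real
  assumes norms: "\<And>n. n \<ge> 1 \<Longrightarrow> is_norm (N n)"
    and lin: "\<And>n. n \<ge> 1 \<Longrightarrow> linear (A n)"
    and inv: "\<And>n. n \<ge> 1 \<Longrightarrow> bij (A n)"
    and K: "K > 0" and a: "a > 0"
    and growth_fwd: "\<And>m n x. 1 \<le> n \<Longrightarrow> n \<le> m \<Longrightarrow>
       N m (evol A m n x) \<le> K * (real m / real n) powr a * N n x"
    and growth_bwd: "\<And>m n x. 1 \<le> n \<Longrightarrow> n \<le> m \<Longrightarrow>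
       N n (evol A n m x) \<le> K * (real m / real n) powr a * N m x"
    and H: "strong_exp_dich (\<lambda>n. evol A (2 ^ (n + 1)) (2 ^ n)) (\<lambda>n. N (2 ^ n))"
  shows "strong_poly_dich A N"
proof -
  obtain K2 a2 lam2 Pt where K2: "K2 > 0" and al2: "a2 \<ge> lam2" and lam2: "lam2 > 0"
    and proj: "\<forall>n. is_projection (Pt n)"
    and comm: "\<forall>n. evol A (2 ^ (n + 1)) (2 ^ n) \<circ> Pt n = Pt (Suc n) \<circ> evol A (2 ^ (n + 1)) (2 ^ n)"
    and bnd: "\<forall>m n x. n \<le> m \<longrightarrow>
         N (2^m) (evol (\<lambda>n. evol A (2 ^ (n + 1)) (2 ^ n)) m n (Pt n x)) \<le> K2 * exp (-lam2 * (real m - real n)) * N (2^n) x \<and>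
         N (2^n) (evol (\<lambda>n. evol A (2 ^ (n + 1)) (2 ^ n)) n m (x - Pt m x)) \<le> K2 * exp (-lam2 * (real m - real n)) * N (2^m) x \<and>
         N (2^m) (evol (\<lambda>n. evol A (2 ^ (n + 1)) (2 ^ n)) m n x) \<le> K2 * exp (a2 * (real m - real n)) * N (2^n) x \<and>
         N (2^n) (evol (\<lambda>n. evol A (2 ^ (n + 1)) (2 ^ n)) n m x) \<le> K2 * exp (a2 * (real m - real n)) * N (2^m) x"
    using H unfolding strong_exp_dich_def by blast
  let ?E = "evol A"
  have coc: "?E m l (?E l n x) = ?E m n x" if "m \<ge> 1" "l \<ge> 1" "n \<ge> 1" for m l n x
    using evol_cocycle[where A=A, OF inv] that by blast
  have eid: "?E n n x = x" for n x by (simp add: evol_id)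
  have linE: "linear (?E m n)" if "m \<ge> 1" "n \<ge> 1" for m n
    using evol_linear[where A=A, OF inv lin] that by blast
  have p2: "(1::nat) \<le> 2 ^ n" for n by simp
  have stab: "N (2^j) (?E (2^j) (2^i) (Pt i x)) \<le> K2 * exp (-lam2 * (real j - real i)) * N (2^i) x"
    if "i \<le> j" for i j x
    using conjunct1[OF bnd[rule_format, OF that, of x]] by (simp only: evol_B[where A=A, OF inv])
  have unst: "N (2^i) (?E (2^i) (2^j) (x - Pt j x)) \<le> K2 * exp (-lam2 * (real j - real i)) * N (2^j) x"
    if "i \<le> j" for i j x
    using conjunct1[OF conjunct2[OF bnd[rule_format, OF that, of x]]] by (simp only: evol_B[where A=A, OF inv])
  have commPt: "?E (2^j) 1 (Pt 0 x) = Pt j (?E (2^j) 1 x)" for j x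
  proof (induction j arbitrary: x)
    case 0 then show ?case by (simp add: eid)
  next
    case (Suc j)
    have "?E (2^Suc j) 1 (Pt 0 x) = ?E (2^(j+1)) (2^j) (?E (2^j) 1 (Pt 0 x))"
      using coc[of "2^Suc j" "2^j" 1] by simp
    also have "\<dots> = ?E (2^(j+1)) (2^j) (Pt j (?E (2^j) 1 x))" using Suc by simp
    also have "\<dots> = Pt (Suc j) (?E (2^(j+1)) (2^j) (?E (2^j) 1 x))"
      using comm by (auto simp: fun_eq_iff)
    also have "\<dots> = Pt (Suc j) (?E (2^Suc j) 1 x)"
      using coc[of "2^Suc j" "2^j" 1] by simp
    finally show ?case .
  qed
  define P where "P k = (\<lambda>x. ?E k 1 (Pt 0 (?E 1 k x)))" for k
  have Prep: "P k x = ?E k (2^j) (Pt j (?E (2^j) k x))" if "k \<ge> 1" for k j x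
  proof -
    have "?E k (2^j) (Pt j (?E (2^j) k x)) = ?E k (2^j) (Pt j (?E (2^j) 1 (?E 1 k x)))"
      using coc that by simp
    also have "\<dots> = ?E k (2^j) (?E (2^j) 1 (Pt 0 (?E 1 k x)))" by (simp only: commPt)
    also have "\<dots> = P k x" using coc that by (simp add: P_def)
    finally show ?thesis by simp
  qed
  have Nnn: "N k x \<ge> 0" if "k \<ge> 1" for k x using norms[OF that] unfolding is_norm_def by blast
  define lam where "lam = lam2 / ln 2"
  define Kb where "Kb = K * 2 powr a * K2 * 2 powr lam * K * 2 powr a"
  define Kn where "Kn = max K Kb"
  define an where "an = max a lam"
  have lam: "lam > 0" using lam2 by (simp add: lam_def)
  have dyad: "\<exists>i. 2^i \<le> n \<and> n < 2^(i+1)" if "n \<ge> 1" for n :: nat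
    using ex_power_ivl1[of 2 n] that by auto
  have ratio: "real m / real (2^j) \<le> 2" "0 \<le> real m / real (2^j)" if "m < 2^(j+1)" for m j :: nat
  proof -
    have "m \<le> 2 * 2^j" using that by simp
    then have "real m \<le> real (2 * 2^j)" by (simp only: of_nat_le_iff)
    then have "real m \<le> 2 * real (2^j)" by simp
    then show "real m / real (2^j) \<le> 2" by (simp add: field_simps)
  qed simp
  have ij: "i \<le> j" if "2^i \<le> n" "n \<le> m" "m < (2::nat)^(j+1)" for i j n m :: nat
  proof -
    have "(2::nat)^i < 2^(j+1)" using that by linarith
    then have "i < j + 1" using power_less_imp_less_exp[of "2::nat" i "j+1"] by simp
    then show ?thesis by simp
  qed
  have main_stab: "N m (?E m n (P n x)) \<le> Kb * (real m / real n) powr (-lam) * N n x"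
    if "1 \<le> n" "n \<le> m" for m n x
  proof -
    obtain i where i: "2^i \<le> n" "n < 2^(i+1)" using dyad[of n] \<open>1 \<le> n\<close> by blast
    obtain j where j: "2^j \<le> m" "m < 2^(j+1)" using dyad[of m] \<open>1 \<le> n\<close> \<open>n \<le> m\<close> by fastforce
    have "i \<le> j" using ij i j that by blast
    define y where "y = ?E (2^i) n x"
    have eq: "?E m n (P n x) = ?E m (2^j) (?E (2^j) (2^i) (Pt i y))"
      using Prep[OF that(1), of x i] coc that by (simp add: y_def)
    have h1: "N m (?E m (2^j) (?E (2^j) (2^i) (Pt i y))) \<le> K * (real m / real (2^j)) powr a * N (2^j) (?E (2^j) (2^i) (Pt i y))"
      by (rule growth_fwd[OF p2 j(1)])
    have h3: "N (2^i) y \<le> K * (real n / real (2^i)) powr a * N n x"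
      unfolding y_def by (rule growth_bwd[OF p2 i(1)])
    have "N m (?E m n (P n x)) \<le> (K * 2 powr a * K2 * 2 powr lam * K * 2 powr a) * (real m / real n) powr (-lam) * N n x"
      unfolding eq
      apply (rule key_bound[OF h1 stab[OF \<open>i \<le> j\<close>] h3])
      using ratio[OF j(2)] ratio[OF i(2)] Nnn[OF that(1)] K K2 a
        exp_vs_poly[OF lam2 i(1) that(2) j(2)] by (auto simp: lam_def)
    then show ?thesis by (simp add: Kb_def)
  qed
  have main_unst: "N n (?E n m (x - P m x)) \<le> Kb * (real m / real n) powr (-lam) * N m x"
    if "1 \<le> n" "n \<le> m" for m n x
  proof -
    obtain i where i: "2^i \<le> n" "n < 2^(i+1)" using dyad[of n] \<open>1 \<le> n\<close> by blast
    obtain j where j: "2^j \<le> m" "m < 2^(j+1)" using dyad[of m] \<open>1 \<le> n\<close> \<open>n \<le> m\<close> by fastforce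
    have "i \<le> j" using ij i j that by blast
    have m1: "m \<ge> 1" using that by simp
    define y where "y = ?E (2^j) m x"
    have xe: "x = ?E m (2^j) y" unfolding y_def using coc[of m "2^j" m x] m1 eid by simp
    have "x - P m x = ?E m (2^j) (y - Pt j y)"
    proof -
      have Pm: "P m x = ?E m (2^j) (Pt j y)" using Prep[OF m1, of x j] by (simp add: y_def)
      have "x - P m x = ?E m (2^j) y - ?E m (2^j) (Pt j y)" unfolding Pm by (subst (1) xe) (rule refl)
      then show ?thesis using linear_diff[OF linE[of m "2^j"]] m1 by simp
    qed
    then have eq: "?E n m (x - P m x) = ?E n (2^i) (?E (2^i) (2^j) (y - Pt j y))"
      using coc that m1 by simp
    have h1: "N n (?E n (2^i) (?E (2^i) (2^j) (y - Pt j y))) \<le> K * (real n / real (2^i)) powr a * N (2^i) (?E (2^i) (2^j) (y - Pt j y))"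
      by (rule growth_fwd[OF p2 i(1)])
    have h3: "N (2^j) y \<le> K * (real m / real (2^j)) powr a * N m x"
      unfolding y_def by (rule growth_bwd[OF p2 j(1)])
    have "N n (?E n m (x - P m x)) \<le> (K * 2 powr a * K2 * 2 powr lam * K * 2 powr a) * (real m / real n) powr (-lam) * N m x"
      unfolding eq
      apply (rule key_bound[OF h1 unst[OF \<open>i \<le> j\<close>] h3])
      using ratio[OF j(2)] ratio[OF i(2)] Nnn[OF m1] K K2 a
        exp_vs_poly[OF lam2 i(1) that(2) j(2)] by (auto simp: lam_def)
    then show ?thesis by (simp add: Kb_def)
  qed
  have Kb0: "Kb \<ge> 0" using K K2 by (simp add: Kb_def)
  have grow: "K * (real m / real n) powr a * z \<le> Kn * (real m / real n) powr an * z"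
    if "1 \<le> n" "n \<le> m" "0 \<le> z" for m n :: nat and z :: real
  proof -
    have r: "real m / real n \<ge> 1" using that by simp
    have "(real m / real n) powr a \<le> (real m / real n) powr an"
      using r by (intro powr_mono) (auto simp: an_def)
    moreover have "K \<le> Kn" by (simp add: Kn_def)
    ultimately show ?thesis using that K
      by (intro mult_right_mono mult_mono) auto
  qed
  have decr: "Kb * (real m / real n) powr (-lam) * z \<le> Kn * (real m / real n) powr (-lam) * z"
    if "0 \<le> z" for m n :: nat and z :: real
    using that by (intro mult_right_mono) (auto simp: Kn_def)
  show ?thesis unfolding strong_poly_dich_def
  proof (intro exI conjI allI impI)
    show "Kn > 0" using K by (simp add: Kn_def)
    show "an \<ge> lam" by (simp add: an_def)
    show "lam > 0" by (rule lam)
    show "is_projection (P n)" if "n \<ge> 1" for n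
    proof -
      have lp: "linear (Pt 0)" using proj by (simp add: is_projection_def)
      have idem: "Pt 0 (Pt 0 z) = Pt 0 z" for z using proj by (simp add: is_projection_def)
      have Pe: "P n = ?E n 1 \<circ> (Pt 0 \<circ> ?E 1 n)" by (simp add: P_def fun_eq_iff)
      have "linear (P n)" unfolding Pe
        using linE[of n 1] linE[of 1 n] that lp
        by (intro linear_compose) auto
      moreover have "P n (P n z) = P n z" for z
        using coc[of 1 n 1] that by (simp add: P_def eid idem)
      ultimately show ?thesis by (simp add: is_projection_def)
    qed
    show "A n \<circ> P n = P (Suc n) \<circ> A n" if "n \<ge> 1" for n
    proof -
      have An: "A n z = ?E (Suc n) n z" for z by (simp add: evol_def)
      show ?thesis unfolding fun_eq_iff o_def An P_def using coc that by simp
    qed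
    fix m n :: nat and x :: "real^'d" assume nm: "1 \<le> n \<and> n \<le> m"
    show "N m (?E m n (P n x)) \<le> Kn * (real m / real n) powr (-lam) * N n x"
      using main_stab[of n m x] decr[of "N n x" m n] Nnn[of n x] nm by linarith
    show "N n (?E n m (x - P m x)) \<le> Kn * (real m / real n) powr (-lam) * N m x"
      using main_unst[of n m x] decr[of "N m x" m n] Nnn[of m x] nm by linarith
    show "N m (?E m n x) \<le> Kn * (real m / real n) powr an * N n x"
      using growth_fwd[of n m x] grow[of n m "N n x"] Nnn[of n x] nm by linarith
    show "N n (?E n m x) \<le> Kn * (real m / real n) powr an * N m x"
      using growth_bwd[of n m x] grow[of n m "N m x"] Nnn[of m x] nm by linarith
  qed
qed

theorem proposition2p3:
  fixes A :: "nat \<Rightarrow> real ^ 'd \<Rightarrow> real ^ 'd"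
    and N :: "nat \<Rightarrow> real ^ 'd \<Rightarrow> real"
    and K a :: real
  assumes norms: "\<And>n. n \<ge> 1 \<Longrightarrow> is_norm (N n)"
    and lin: "\<And>n. n \<ge> 1 \<Longrightarrow> linear (A n)"
    and inv: "\<And>n. n \<ge> 1 \<Longrightarrow> bij (A n)"
    and K: "K > 0" and a: "a > 0"
    and growth_fwd: "\<And>m n x. 1 \<le> n \<Longrightarrow> n \<le> m \<Longrightarrow>
       N m (evol A m n x) \<le> K * (real m / real n) powr a * N n x"
    and growth_bwd: "\<And>m n x. 1 \<le> n \<Longrightarrow> n \<le> m \<Longrightarrow>
       N n (evol A n m x) \<le> K * (real m / real n) powr a * N m x"
  shows "strong_poly_dich A N \<longleftrightarrow>
         strong_exp_dich (\<lambda>n. evol A (2 ^ (n + 1)) (2 ^ n)) (\<lambda>n. N (2 ^ n))"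
proof
  assume "strong_poly_dich A N"
  then show "strong_exp_dich (\<lambda>n. evol A (2 ^ (n + 1)) (2 ^ n)) (\<lambda>n. N (2 ^ n))"
    using dir1[where A=A, OF inv] by blast
next
  assume "strong_exp_dich (\<lambda>n. evol A (2 ^ (n + 1)) (2 ^ n)) (\<lambda>n. N (2 ^ n))"
  then show "strong_poly_dich A N"
    using dir2[where A=A and N=N and K=K and a=a, OF norms lin inv K a growth_fwd growth_bwd] by blast
qed

end
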